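(* Fix a nonempty directed edge set $\mathcal{E}$ and a randomized design with $0<\mathbb{E}[z_i]<1$ for all $i$. Then there is no choice of deterministic weights ${\bf w},{\bf v}$ such that the individually weighted linear estimator $\sum_i(w_iz_i+v_i(1-z_i))Y_i({\bf z})$ has expectation equal to $\mathrm{AIE}$ for every choice of real parameters $\alpha,\beta,\{\gamma_{ki}\}_{(k,i)\in\mathcal{E}}$ of the heterogeneous additive network effects model.
   Context: Population $[n]$; random treatment vector ${\bf z}\in\{0,1\}^n$ drawn from a randomized design. Heterogeneous additive network effects model: $Y_i({\bf z})=\alpha_i+\beta_iz_i+\sum_{k\in[n]}\gamma_{ki}z_k$ with deterministic real parameters, $\gamma_{ki}=0$ unless $(k,i)\in\mathcal{E}$, where $\mathcal{E}$ is a set of ordered pairs $(k,i)$, $k\neq i$. Average interference effect: $\mathrm{AIE}=\frac1n\sum_i(Y_i({\bf e}_{[n]\setminus\{i\}})-Y_i({\bf 0}))=\frac1n\sum_{(k,i)\in\mathcal{E}}\gamma_{ki}$, where ${\bf e}_S$ is the indicator vector of $S\subseteq[n]$. *)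

theory Defs
  imports "HOL-Probability.Probability"
begin

text \<open>Population is {..<n}; a treatment vector is z :: nat \<Rightarrow> bool (z i = unit i treated).
  Heterogeneous additive network effects model:
  Y_i(z) = alpha_i + beta_i z_i + sum_k gamma_{ki} z_k.\<close>

definition Ynet :: "nat \<Rightarrow> (nat \<Rightarrow> real) \<Rightarrow> (nat \<Rightarrow> real) \<Rightarrow> (nat \<Rightarrow> nat \<Rightarrow> real)
    \<Rightarrow> nat \<Rightarrow> (nat \<Rightarrow> bool) \<Rightarrow> real" where
  "Ynet n \<alpha> \<beta> \<gamma> i z = \<alpha> i + \<beta> i * of_bool (z i) + (\<Sum>k<n. \<gamma> k i * of_bool (z k))"

definition AIE :: "nat \<Rightarrow> (nat \<Rightarrow> real) \<Rightarrow> (nat \<Rightarrow> real) \<Rightarrow> (nat \<Rightarrow> nat \<Rightarrow> real) \<Rightarrow> real" where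
  "AIE n \<alpha> \<beta> \<gamma> = (1 / real n) *
     (\<Sum>i<n. Ynet n \<alpha> \<beta> \<gamma> i (\<lambda>k. k < n \<and> k \<noteq> i) - Ynet n \<alpha> \<beta> \<gamma> i (\<lambda>_. False))"

definition lin_est :: "nat \<Rightarrow> (nat \<Rightarrow> real) \<Rightarrow> (nat \<Rightarrow> real) \<Rightarrow> (nat \<Rightarrow> real) \<Rightarrow> (nat \<Rightarrow> real)
    \<Rightarrow> (nat \<Rightarrow> nat \<Rightarrow> real) \<Rightarrow> (nat \<Rightarrow> bool) \<Rightarrow> real" where
  "lin_est n w v \<alpha> \<beta> \<gamma> z =
     (\<Sum>i<n. (w i * of_bool (z i) + v i * (1 - of_bool (z i))) * Ynet n \<alpha> \<beta> \<gamma> i z)"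

end

theory Submission
  imports Defs
begin

lemma sum_single:
  fixes g :: "nat \<Rightarrow> real"
  assumes "j < n" "\<And>i. i \<noteq> j \<Longrightarrow> g i = 0"
  shows "(\<Sum>i<n. g i) = g j"
proof -
  have "(\<Sum>i<n. g i) = g j + (\<Sum>i\<in>{..<n}-{j}. g i)"
    using assms(1) by (simp add: sum.remove)
  also have "(\<Sum>i\<in>{..<n}-{j}. g i) = 0" using assms(2) by simp
  finally show ?thesis by simp
qed

lemma int_bool:
  fixes D :: "(nat \<Rightarrow> bool) pmf"
  shows "integrable (measure_pmf D) (\<lambda>z. of_bool (z i) :: real)"
  by (rule measure_pmf.integrable_const_bound[where B=1]) auto

theorem theorem5:
  fixes n :: nat and E :: "(nat \<times> nat) set" and D :: "(nat \<Rightarrow> bool) pmf"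
  assumes E_sub: "E \<subseteq> {(k, i). k < n \<and> i < n \<and> k \<noteq> i}"
    and E_ne: "E \<noteq> {}"
    and design: "\<And>i. i < n \<Longrightarrow>
        0 < measure_pmf.expectation D (\<lambda>z. of_bool (z i) :: real) \<and>
        measure_pmf.expectation D (\<lambda>z. of_bool (z i) :: real) < 1"
  shows "\<not> (\<exists>w v :: nat \<Rightarrow> real. \<forall>\<alpha> \<beta> (\<gamma> :: nat \<Rightarrow> nat \<Rightarrow> real).
            (\<forall>k i. (k, i) \<notin> E \<longrightarrow> \<gamma> k i = 0) \<longrightarrow>
            measure_pmf.expectation D (lin_est n w v \<alpha> \<beta> \<gamma>) = AIE n \<alpha> \<beta> \<gamma>)"
proof
  assume "\<exists>w v :: nat \<Rightarrow> real. \<forall>\<alpha> \<beta> (\<gamma> :: nat \<Rightarrow> nat \<Rightarrow> real).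
            (\<forall>k i. (k, i) \<notin> E \<longrightarrow> \<gamma> k i = 0) \<longrightarrow>
            measure_pmf.expectation D (lin_est n w v \<alpha> \<beta> \<gamma>) = AIE n \<alpha> \<beta> \<gamma>"
  then obtain w v :: "nat \<Rightarrow> real" where H: "\<And>\<alpha> \<beta> (\<gamma> :: nat \<Rightarrow> nat \<Rightarrow> real).
            (\<forall>k i. (k, i) \<notin> E \<longrightarrow> \<gamma> k i = 0) \<Longrightarrow>
            measure_pmf.expectation D (lin_est n w v \<alpha> \<beta> \<gamma>) = AIE n \<alpha> \<beta> \<gamma>"
    by blast
  define p where "p j = measure_pmf.expectation D (\<lambda>z. of_bool (z j) :: real)" for j
  have wv0: "w j = 0 \<and> v j = 0" if j: "j < n" for j
  proof -
    have A: "AIE n (\<lambda>i. if i = j then 1 else 0) (\<lambda>_. 0) (\<lambda>_ _. 0) = 0"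
      by (simp add: AIE_def Ynet_def)
    have B: "AIE n (\<lambda>_. 0) (\<lambda>i. if i = j then 1 else 0) (\<lambda>_ _. 0) = 0"
      by (simp add: AIE_def Ynet_def)
    have LA: "lin_est n w v (\<lambda>i. if i = j then 1 else 0) (\<lambda>_. 0) (\<lambda>_ _. 0)
        = (\<lambda>z. w j * of_bool (z j) + v j - v j * of_bool (z j))"
      unfolding lin_est_def Ynet_def fun_eq_iff
      by (intro allI trans[OF sum_single[OF j]]) (auto simp: algebra_simps)
    have LB: "lin_est n w v (\<lambda>_. 0) (\<lambda>i. if i = j then 1 else 0) (\<lambda>_ _. 0)
        = (\<lambda>z. w j * of_bool (z j))"
      unfolding lin_est_def Ynet_def fun_eq_iff
      by (intro allI trans[OF sum_single[OF j]]) (auto simp: algebra_simps)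
    have eA: "w j * p j + v j - v j * p j = 0"
      using H[of "\<lambda>_ _. 0" "\<lambda>i. if i = j then 1 else 0" "\<lambda>_. 0"] A LA
      by (simp add: p_def int_bool)
    have eB: "w j * p j = 0"
      using H[of "\<lambda>_ _. 0" "\<lambda>_. 0" "\<lambda>i. if i = j then 1 else 0"] B LB
      by (simp add: p_def int_bool)
    have "0 < p j" "p j < 1" using design[OF j] by (auto simp: p_def)
    then have w0: "w j = 0" using eB by simp
    then have "v j * (1 - p j) = 0" using eA by (simp add: algebra_simps)
    with \<open>p j < 1\<close> have "v j = 0" by simp
    with w0 show ?thesis by simp
  qed
  obtain k0 i0 where e: "(k0, i0) \<in> E" using E_ne by auto
  with E_sub have k0: "k0 < n" and i0: "i0 < n" and ne: "k0 \<noteq> i0" by auto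
  define g where "g k i = (if k = k0 \<and> i = i0 then 1 else (0::real))" for k i
  have gE: "\<forall>k i. (k, i) \<notin> E \<longrightarrow> g k i = 0" using e by (auto simp: g_def)
  have L0: "lin_est n w v (\<lambda>_. 0) (\<lambda>_. 0) g = (\<lambda>_. 0)"
    using wv0 by (simp add: lin_est_def fun_eq_iff)
  have "AIE n (\<lambda>_. 0) (\<lambda>_. 0) g = 1 / real n"
  proof -
    have "(\<Sum>i<n. Ynet n (\<lambda>_. 0) (\<lambda>_. 0) g i (\<lambda>k. k < n \<and> k \<noteq> i) - Ynet n (\<lambda>_. 0) (\<lambda>_. 0) g i (\<lambda>_. False))
        = (\<Sum>i<n. if i = i0 then 1 else 0)"
      using k0 ne by (intro sum.cong refl) (auto simp: Ynet_def g_def)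
    also have "\<dots> = 1" using i0 by simp
    finally show ?thesis by (simp add: AIE_def)
  qed
  moreover have "measure_pmf.expectation D (lin_est n w v (\<lambda>_. 0) (\<lambda>_. 0) g) = AIE n (\<lambda>_. 0) (\<lambda>_. 0) g"
    by (rule H[OF gE])
  ultimately show False using L0 k0 by simp
qed

end
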